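(* Let $U\subset\mathbb{R}^n$ be an open bounded set satisfying the cone condition, or $U=\mathbb{R}^n$. For $\alpha\in(0,1)$, $r\in(0,\mathrm{diam}(U))$ and $x\in U$ set \[ W^x_{r,\alpha}=\big\{(w_1,\dots,w_n)\in(\mathbf{B}(0,r))^n\subset(\mathbb{R}^n)^n:\ x+w_i\in U\ \text{for all } i,\ |w_1\wedge\dots\wedge w_n|\ge\alpha r^n\big\}. \] Let $x\in U$. Then there exists $\tilde\alpha\in(0,1)$ such that for all $r\in(0,\mathrm{diam}(U))$ \[ \mathcal{H}^{n^2}(W^x_{r,\tilde\alpha})\ge C r^{n^2}, \] where $C>0$ depends only on $n$ and $U$.
   Context: $\mathbf{B}(0,r)$ is the closed ball of radius $r$ centered at $0$; $\mathrm{diam}(\mathbb{R}^n)=\infty$. For $w_1,\dots,w_n\in\mathbb{R}^n$, $|w_1\wedge\dots\wedge w_n|$ is the $n$-dimensional volume of the parallelotope spanned by $w_1,\dots,w_n$, i.e. $|\det(w_1,\dots,w_n)|$. $\mathcal{H}^{n^2}$ is the Hausdorff (=Lebesgue) measure on $(\mathbb{R}^n)^n$. Cone condition: an open bounded $U\subset\mathbb{R}^n$ satisfies it if there exist bounded open sets $U_1,\dots,U_m$ and cones $C_1,\dots,C_m$, each a rotated copy of a fixed cone $K_h=\{(x',x_n):0<x_n<h,\ |x'|<ax_n\}$, such that $\partial U\subset\bigcup_i U_i$ and $(U\cap U_i)+C_i\subset U$ for each $i$. *)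

theory Defs
  imports "HOL-Analysis.Analysis"
begin

text \<open>The fixed finite cone with vertex 0, axis the unit vector e, height h and
aperture a: in coordinates where e is the last axis this is
K_h = {(x',x_n). 0 < x_n < h, |x'| < a x_n}.\<close>
definition std_cone :: "real \<Rightarrow> real \<Rightarrow> 'a::euclidean_space \<Rightarrow> 'a set" where
  "std_cone a h e = {y. 0 < y \<bullet> e \<and> y \<bullet> e < h \<and> norm (y - (y \<bullet> e) *\<^sub>R e) < a * (y \<bullet> e)}"

definition rotation :: "(real^'n \<Rightarrow> real^'n) \<Rightarrow> bool" where
  "rotation f \<longleftrightarrow> orthogonal_transformation f \<and> det (matrix f) = 1"

text \<open>Cone condition for an open bounded set.\<close>
definition cone_condition :: "(real^'n) set \<Rightarrow> bool" where
  "cone_condition U \<longleftrightarrow> open U \<and> bounded U \<and>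
     (\<exists>a h e. a > 0 \<and> h > 0 \<and> norm e = 1 \<and>
       (\<exists>(m::nat) (V :: nat \<Rightarrow> (real^'n) set) (C :: nat \<Rightarrow> (real^'n) set).
          (\<forall>i<m. open (V i) \<and> bounded (V i) \<and>
                 (\<exists>R. rotation R \<and> C i = R ` std_cone a h e) \<and>
                 {p + c | p c. p \<in> U \<inter> V i \<and> c \<in> C i} \<subseteq> U) \<and>
          frontier U \<subseteq> (\<Union>i<m. V i)))"

text \<open>W^x_{r,alpha}: n-tuples (rows of an n x n matrix) of vectors in the closed
r-ball, with x + w_i in U and |w_1 wedge ... wedge w_n| >= alpha r^n.\<close>
definition Wset :: "(real^'n) set \<Rightarrow> real^'n \<Rightarrow> real \<Rightarrow> real \<Rightarrow> (real^'n^'n) set" where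
  "Wset U x r \<alpha> = {w. (\<forall>i. w $ i \<in> cball 0 r \<and> x + w $ i \<in> U) \<and>
                       \<bar>det w\<bar> \<ge> \<alpha> * r ^ CARD('n)}"

end

theory Submission
  imports Defs
begin

lemma continuous_on_det: "continuous_on UNIV (det :: real^'n^'n \<Rightarrow> real)"
proof -
  have "continuous_on UNIV (\<lambda>A::real^'n^'n. sum (\<lambda>p. of_int (sign p) * prod (\<lambda>i. A$i$p i) (UNIV :: 'n set))
      {p. p permutes (UNIV :: 'n set)})"
    by (intro continuous_on_sum continuous_on_mult continuous_on_const continuous_on_prod
          continuous_on_component continuous_on_id)
  then show ?thesis unfolding det_def[abs_def] .
qed

lemma open_rows_det:
  fixes S :: "(real^'n) set"
  assumes "open S" "S \<noteq> {}"
  shows "\<exists>N::real^'n^'n. (\<forall>i. N $ i \<in> S) \<and> det N \<noteq> 0"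
proof -
  have "dim S = dim (UNIV :: (real^'n) set)"
    by (rule dim_openin) (use assms in auto)
  then have dS: "dim S = CARD('n)" by simp
  obtain B where B: "B \<subseteq> S" "independent B" "S \<subseteq> span B" "card B = dim S"
    by (rule basis_exists)
  have "finite B" by (rule finiteI_independent[OF B(2)])
  have "\<exists>f. bij_betw f (UNIV::'n set) B"
    by (rule finite_same_card_bij) (use \<open>finite B\<close> B(4) dS in auto)
  then obtain f :: "'n \<Rightarrow> real^'n" where f: "bij_betw f UNIV B"
    by blast
  define N :: "real^'n^'n" where "N = (\<chi> i. f i)"
  have rowsN: "rows N = B"
    using f unfolding rows_def row_def N_def bij_betw_def by (auto simp: vec_lambda_eta)
  have "rank N = CARD('n)"
    unfolding row_rank_def rowsN using dim_eq_card_independent[OF B(2)] B(4) dS by simp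
  then have "det N \<noteq> 0" using det_eq_0_rank[of N] by simp
  moreover have "\<forall>i. N $ i \<in> S" using f B(1) unfolding N_def bij_betw_def by auto
  ultimately show ?thesis by blast
qed

lemma Wset_lebesgue:
  fixes U :: "(real^'n) set"
  assumes "open U"
  shows "Wset U x r \<alpha> \<in> sets lebesgue"
proof -
  have eq: "Wset U x r \<alpha> = ((\<Inter>i. (\<lambda>w. w $ i) -` cball 0 r) \<inter> {w. \<alpha> * r ^ CARD('n) \<le> \<bar>det w\<bar>})
       \<inter> (\<Inter>i. (\<lambda>w. w $ i) -` ((\<lambda>y. x + y) -` U))"
    unfolding Wset_def by auto
  have c1: "closed ((\<Inter>i. (\<lambda>w::real^'n^'n. w $ i) -` cball 0 r) \<inter> {w. \<alpha> * r ^ CARD('n) \<le> \<bar>det w\<bar>})"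
  proof (intro closed_Int closed_INT ballI closed_vimage_vec_nth closed_cball)
    show "closed {w::real^'n^'n. \<alpha> * r ^ CARD('n) \<le> \<bar>det w\<bar>}"
      by (intro closed_Collect_le continuous_on_const continuous_on_rabs continuous_on_det)
  qed
  have "open ((\<lambda>y. x + y) -` U)"
    by (rule continuous_open_vimage[OF assms]) (intro continuous_intros)
  then have o1: "open (\<Inter>i. (\<lambda>w::real^'n^'n. w $ i) -` ((\<lambda>y. x + y) -` U))"
    by (intro open_INT ballI open_vimage_vec_nth) auto
  show ?thesis unfolding eq
    by (intro sets.Int borel_open borel_closed c1 o1 sets_completionI_sets[of _ lborel, unfolded sets_lborel]) 
qed

lemma emeasure_lebesgue_ball:
  assumes "r \<ge> 0" shows "emeasure lebesgue (ball (c::'a::euclidean_space) r) = ennreal (unit_ball_vol (DIM('a)) * r ^ DIM('a))"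
  using emeasure_ball[OF assms, of c] by simp


lemma DIM_mat: "DIM(real^'n^'n) = CARD('n)^2"
  by (simp add: power2_eq_square)

lemma key:
  fixes S :: "(real^'n) set" and U :: "(real^'n) set"
  assumes S: "open S" "S \<noteq> {}" and D: "D > 0" and SD: "\<forall>y\<in>S. norm y \<le> D" and U: "open U"
  shows "\<exists>\<alpha> c. 0 < \<alpha> \<and> \<alpha> < 1 \<and> c > 0 \<and>
    (\<forall>x r. (\<forall>y\<in>S. \<forall>t. 0 < t \<and> t \<le> 1 \<longrightarrow> x + t *\<^sub>R y \<in> U) \<and> 0 < r \<and> (U = UNIV \<or> r \<le> D) \<longrightarrow>
        emeasure lebesgue (Wset U x r \<alpha>) \<ge> ennreal (c * r ^ (CARD('n) ^ 2)))"
proof -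
  obtain N0 :: "real^'n^'n" where N0: "\<forall>i. N0 $ i \<in> S" "det N0 \<noteq> 0"
    using open_rows_det[OF S] by blast
  define \<beta> where "\<beta> = \<bar>det N0\<bar> / 2"
  have \<beta>: "\<beta> > 0" using N0(2) by (simp add: \<beta>_def)
  obtain \<delta>1 where \<delta>1: "\<delta>1 > 0" "\<forall>M. dist M N0 < \<delta>1 \<longrightarrow> dist (det M) (det N0) < \<beta>"
    using continuous_on_det[unfolded continuous_on_iff] \<beta> by blast
  have "\<forall>i. \<exists>e>0. ball (N0 $ i) e \<subseteq> S"
    using S(1) N0(1) open_contains_ball by blast
  then have "\<exists>\<epsilon>. \<forall>i. \<epsilon> i > 0 \<and> ball (N0 $ i) (\<epsilon> i) \<subseteq> S"
    by (rule choice)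
  then obtain \<epsilon> :: "'n \<Rightarrow> real" where \<epsilon>0: "\<forall>i. \<epsilon> i > 0 \<and> ball (N0 $ i) (\<epsilon> i) \<subseteq> S"
    by blast
  then have \<epsilon>: "\<And>i. \<epsilon> i > 0" "\<And>i. ball (N0 $ i) (\<epsilon> i) \<subseteq> S" by auto
  define \<delta>2 where "\<delta>2 = Min (range \<epsilon>)"
  have \<delta>2: "\<delta>2 > 0" "\<And>i. \<delta>2 \<le> \<epsilon> i"
    unfolding \<delta>2_def using \<epsilon>(1) by (auto simp: Min_gr_iff)
  define \<delta> where "\<delta> = min \<delta>1 \<delta>2"
  have \<delta>: "\<delta> > 0" using \<delta>1 \<delta>2 by (simp add: \<delta>_def)
  define n where "n = CARD('n)"
  define \<alpha> where "\<alpha> = min (\<beta> / D ^ n) (1/2)"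
  define c where "c = unit_ball_vol (DIM(real^'n^'n)) * (\<delta> / D) ^ (n ^ 2)"
  have \<alpha>: "0 < \<alpha>" "\<alpha> < 1" using \<beta> D by (auto simp: \<alpha>_def)
  have c: "c > 0" unfolding c_def by (rule mult_pos_pos[OF unit_ball_vol_pos]) (use \<delta> D in auto)
  have main: "emeasure lebesgue (Wset U x r \<alpha>) \<ge> ennreal (c * r ^ (CARD('n) ^ 2))"
    if hx: "\<forall>y\<in>S. \<forall>t. 0 < t \<and> t \<le> 1 \<longrightarrow> x + t *\<^sub>R y \<in> U" and r: "0 < r" "U = UNIV \<or> r \<le> D" for x r
  proof -
    define s where "s = r / D"
    have s: "s > 0" using r D by (simp add: s_def)
    have sub: "ball (s *\<^sub>R N0) (s * \<delta>) \<subseteq> Wset U x r \<alpha>"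
    proof
      fix w assume w: "w \<in> ball (s *\<^sub>R N0) (s * \<delta>)"
      define M where "M = (1/s) *\<^sub>R w"
      have wM: "w = s *\<^sub>R M" using s by (simp add: M_def)
      have "dist (s *\<^sub>R N0) (s *\<^sub>R M) < s * \<delta>" using w wM by simp
      then have "s * dist N0 M < s * \<delta>"
        using s by (simp add: dist_norm flip: scaleR_diff_right)
      then have dM: "dist M N0 < \<delta>" using s by (simp add: dist_commute)
      have rowS: "M $ i \<in> S" for i
      proof -
        have "norm (M $ i - N0 $ i) \<le> norm (M - N0)"
          using Finite_Cartesian_Product.norm_nth_le[of "M - N0" i] by simp
        also have "\<dots> < \<epsilon> i" using dM \<delta>2(2)[of i] by (simp add: \<delta>_def dist_norm)
        finally have "M $ i \<in> ball (N0 $ i) (\<epsilon> i)" by (simp add: dist_norm norm_minus_commute)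
        then show ?thesis using \<epsilon>(2) by blast
      qed
      have rows: "w $ i \<in> cball 0 r \<and> x + w $ i \<in> U" for i
      proof
        have "norm (w $ i) = s * norm (M $ i)" using wM s by simp
        also have "\<dots> \<le> s * D" using SD rowS s by (simp add: mult_left_mono)
        also have "\<dots> = r" using D by (simp add: s_def)
        finally show "w $ i \<in> cball 0 r" by simp
        show "x + w $ i \<in> U"
          using r(2)
        proof
          assume "r \<le> D"
          then have "s \<le> 1" using D by (simp add: s_def)
          then show ?thesis using hx rowS s wM by simp
        qed simp
      qed
      have "\<bar>det M - det N0\<bar> < \<beta>" using \<delta>1(2) dM by (simp add: \<delta>_def dist_real_def)
      then have dMb: "\<bar>det M\<bar> \<ge> \<beta>" unfolding \<beta>_def by linarith
      have "det w = s ^ n * det M"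
      proof -
        have "w = (\<chi> i. s *s (M $ i))" using wM by (simp add: vec_eq_iff scalar_mult_eq_scaleR)
        then have "det w = prod (\<lambda>i. s) (UNIV::'n set) * det (\<chi> i. M $ i)"
          using det_rows_mul[of "\<lambda>i. s" "\<lambda>i. M $ i"] by simp
        then show ?thesis by (simp add: n_def vec_lambda_eta)
      qed
      then have "\<bar>det w\<bar> = s ^ n * \<bar>det M\<bar>" using s by (simp add: abs_mult)
      also have "\<dots> \<ge> s ^ n * \<beta>" using dMb s by (simp add: mult_left_mono)
      finally have "\<bar>det w\<bar> \<ge> (\<beta> / D ^ n) * r ^ n"
        using D by (simp add: s_def power_divide mult_ac)
      moreover have "(\<beta> / D ^ n) * r ^ n \<ge> \<alpha> * r ^ n"
        using r(1) by (intro mult_right_mono) (auto simp: \<alpha>_def)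
      ultimately show "w \<in> Wset U x r \<alpha>"
        unfolding Wset_def n_def using rows by auto
    qed
    have "U = UNIV \<or> open U" using U by auto
    have meas: "Wset U x r \<alpha> \<in> sets lebesgue" using Wset_lebesgue[OF U] .
    have "emeasure lebesgue (ball (s *\<^sub>R N0) (s * \<delta>)) = ennreal (unit_ball_vol (DIM(real^'n^'n)) * (s * \<delta>) ^ DIM(real^'n^'n))"
      by (rule emeasure_lebesgue_ball) (use s \<delta> in simp)
    also have "unit_ball_vol (DIM(real^'n^'n)) * (s * \<delta>) ^ DIM(real^'n^'n) = c * r ^ (CARD('n) ^ 2)"
    proof -
      have e: "r / D * \<delta> = \<delta> / D * r" by simp
      show ?thesis unfolding c_def DIM_mat n_def s_def e power_mult_distrib by simp
    qed
    finally have "ennreal (c * r ^ (CARD('n) ^ 2)) = emeasure lebesgue (ball (s *\<^sub>R N0) (s * \<delta>))" by simp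
    also have "\<dots> \<le> emeasure lebesgue (Wset U x r \<alpha>)"
      by (rule emeasure_mono[OF sub meas])
    finally show ?thesis .
  qed
  show ?thesis using \<alpha> c main by blast
qed

lemma cone_lemma:
  fixes R :: "real^'n \<Rightarrow> real^'n"
  assumes R: "rotation R" and a: "a > 0" and h: "h > 0" and e: "norm e = 1"
  shows "open (R ` std_cone a h e)"
    and "\<And>y t. y \<in> R ` std_cone a h e \<Longrightarrow> 0 < t \<Longrightarrow> t \<le> 1 \<Longrightarrow> t *\<^sub>R y \<in> R ` std_cone a h e"
    and "\<And>t. 0 < t \<Longrightarrow> t < h \<Longrightarrow> R (t *\<^sub>R e) \<in> R ` std_cone a h e \<and> norm (R (t *\<^sub>R e)) = t"
proof -
  have oR: "orthogonal_transformation R" using R by (simp add: rotation_def)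
  have "open (std_cone a h e)" unfolding std_cone_def
    by (intro open_Collect_conj open_Collect_less continuous_intros)
  then show "open (R ` std_cone a h e)"
    by (intro open_surjective_linear_image orthogonal_transformation_linear orthogonal_transformation_surj oR)
next
  fix y :: "real^'n" and t :: real assume y: "y \<in> R ` std_cone a h e" and t: "0 < t" "t \<le> 1"
  have oR: "orthogonal_transformation R" using R by (simp add: rotation_def)
  obtain z where z: "z \<in> std_cone a h e" "y = R z" using y by blast
  have z1: "0 < z \<bullet> e" "z \<bullet> e < h" "norm (z - (z \<bullet> e) *\<^sub>R e) < a * (z \<bullet> e)"
    using z(1) by (auto simp: std_cone_def)
  have le: "t * (z \<bullet> e) \<le> z \<bullet> e" using t z1(1) by (simp add: mult_left_le_one_le)
  have lt: "t * (z \<bullet> e) < h" using le z1(2) by linarith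
  have pos: "0 < t * (z \<bullet> e)" using t z1(1) by simp
  have "norm (t *\<^sub>R z - (t * (z \<bullet> e)) *\<^sub>R e) = t * norm (z - (z \<bullet> e) *\<^sub>R e)"
  proof -
    have "t *\<^sub>R z - (t * (z \<bullet> e)) *\<^sub>R e = t *\<^sub>R (z - (z \<bullet> e) *\<^sub>R e)" by (simp add: algebra_simps)
    then show ?thesis using t by simp
  qed
  moreover have "t * norm (z - (z \<bullet> e) *\<^sub>R e) < a * (t * (z \<bullet> e))"
    using z1(3) t by (simp add: mult.left_commute)
  ultimately have "t *\<^sub>R z \<in> std_cone a h e"
    using lt pos unfolding std_cone_def by auto
  moreover have "t *\<^sub>R y = R (t *\<^sub>R z)" using z(2) oR by (simp add: orthogonal_transformation_scaleR)
  ultimately show "t *\<^sub>R y \<in> R ` std_cone a h e" by blast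
next
  fix t :: real assume t: "0 < t" "t < h"
  have oR: "orthogonal_transformation R" using R by (simp add: rotation_def)
  have ee: "e \<bullet> e = 1" using e by (simp add: dot_square_norm)
  have "t *\<^sub>R e \<in> std_cone a h e" using t a ee by (simp add: std_cone_def)
  then show "R (t *\<^sub>R e) \<in> R ` std_cone a h e \<and> norm (R (t *\<^sub>R e)) = t"
    using oR e t by (simp add: orthogonal_transformation_norm)
qed


theorem lemma4p4:
  fixes U :: "(real^'n) set"
  assumes "cone_condition U \<or> U = UNIV"
  shows "\<exists>C>0. \<forall>x\<in>U. \<exists>\<alpha>. 0 < \<alpha> \<and> \<alpha> < 1 \<and>
           (\<forall>r. 0 < r \<and> (U = UNIV \<or> r < diameter U) \<longrightarrow>
              emeasure lebesgue (Wset U x r \<alpha>) \<ge> ennreal (C * r ^ (CARD('n) ^ 2)))"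
proof (cases "U = UNIV")
  case True
  have "\<exists>\<alpha> c. 0 < \<alpha> \<and> \<alpha> < 1 \<and> c > 0 \<and>
    (\<forall>x r. (\<forall>y\<in>ball 0 1. \<forall>t. 0 < t \<and> t \<le> 1 \<longrightarrow> x + t *\<^sub>R y \<in> U) \<and> 0 < r \<and> (U = UNIV \<or> r \<le> 1) \<longrightarrow>
        emeasure lebesgue (Wset U x r \<alpha>) \<ge> ennreal (c * r ^ (CARD('n) ^ 2)))"
    by (rule key) (use True in auto)
  then obtain \<alpha> c where ac: "0 < \<alpha>" "\<alpha> < 1" "c > 0"
    "\<And>x r. 0 < r \<Longrightarrow> emeasure lebesgue (Wset U x r \<alpha>) \<ge> ennreal (c * r ^ (CARD('n) ^ 2))"
    using True by auto
  show ?thesis using ac by blast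
next
  case False
  with assms have cc: "cone_condition U" by blast
  have U: "open U" "bounded U" and ex1: "\<exists>a h e. a > 0 \<and> h > 0 \<and> norm e = 1 \<and>
       (\<exists>(m::nat) (V :: nat \<Rightarrow> (real^'n) set) (C :: nat \<Rightarrow> (real^'n) set).
          (\<forall>i<m. open (V i) \<and> bounded (V i) \<and>
                 (\<exists>R. rotation R \<and> C i = R ` std_cone a h e) \<and>
                 {p + c | p c. p \<in> U \<inter> V i \<and> c \<in> C i} \<subseteq> U) \<and>
          frontier U \<subseteq> (\<Union>i<m. V i))"
    using cc unfolding cone_condition_def by (simp_all only:)
  obtain a h and e :: "real^'n" where H: "a > 0 \<and> h > 0 \<and> norm e = 1 \<and>
       (\<exists>(m::nat) (V :: nat \<Rightarrow> (real^'n) set) (C :: nat \<Rightarrow> (real^'n) set).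
          (\<forall>i<m. open (V i) \<and> bounded (V i) \<and>
                 (\<exists>R. rotation R \<and> C i = R ` std_cone a h e) \<and>
                 {p + c | p c. p \<in> U \<inter> V i \<and> c \<in> C i} \<subseteq> U) \<and>
          frontier U \<subseteq> (\<Union>i<m. V i))"
    using ex1 by (elim exE) (erule that)
  have a: "a > 0" and h: "h > 0" and e: "norm e = 1" and ex2:
       "\<exists>(m::nat) (V :: nat \<Rightarrow> (real^'n) set) (C :: nat \<Rightarrow> (real^'n) set).
          (\<forall>i<m. open (V i) \<and> bounded (V i) \<and>
                 (\<exists>R. rotation R \<and> C i = R ` std_cone a h e) \<and>
                 {p + c | p c. p \<in> U \<inter> V i \<and> c \<in> C i} \<subseteq> U) \<and>
          frontier U \<subseteq> (\<Union>i<m. V i)"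
    using H by (simp_all only:)
  obtain m :: nat and V Cn :: "nat \<Rightarrow> (real^'n) set" where
        Vi: "\<forall>i<m. open (V i) \<and> bounded (V i) \<and>
                 (\<exists>R. rotation R \<and> Cn i = R ` std_cone a h e) \<and>
                 {p + c | p c. p \<in> U \<inter> V i \<and> c \<in> Cn i} \<subseteq> U"
    and fr: "frontier U \<subseteq> (\<Union>i<m. V i)"
    using ex2 by (elim exE conjE) (erule that, assumption)
  define D where "D = diameter U"
  have rD: "r \<le> D" if "U = UNIV \<or> r < diameter U" for r
    using that False by (simp add: D_def)
  show ?thesis
  proof (cases "D > 0")
    case False
    show ?thesis
    proof (rule exI[of _ 1], intro conjI ballI)
      fix x assume "x \<in> U"
      show "\<exists>\<alpha>. 0 < \<alpha> \<and> \<alpha> < 1 \<and> (\<forall>r. 0 < r \<and> (U = UNIV \<or> r < diameter U) \<longrightarrow>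
              emeasure lebesgue (Wset U x r \<alpha>) \<ge> ennreal (1 * r ^ (CARD('n) ^ 2)))"
      proof (rule exI[of _ "1/2"], intro conjI allI impI)
        fix r assume r: "0 < r \<and> (U = UNIV \<or> r < diameter U)"
        then have False using rD[of r] False by linarith
        then show "emeasure lebesgue (Wset U x r (1/2)) \<ge> ennreal (1 * r ^ (CARD('n) ^ 2))" ..
      qed auto
    qed auto
  next
    case Dpos: True
    define P where "P = (\<lambda>i \<alpha> c. 0 < \<alpha> \<and> \<alpha> < 1 \<and> c > 0 \<and>
      (\<forall>x r. x \<in> U \<and> x \<in> V i \<and> 0 < r \<and> r \<le> D \<longrightarrow>
        emeasure lebesgue (Wset U x r \<alpha>) \<ge> ennreal (c * r ^ (CARD('n) ^ 2))))"
    have Pex: "\<exists>\<alpha> c. P i \<alpha> c" if i: "i < m" for i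
    proof -
      obtain R where R: "rotation R" "Cn i = R ` std_cone a h e" using Vi i by blast
      note cl = cone_lemma[OF R(1) a h e]
      define t0 where "t0 = min h D / 2"
      have t0: "0 < t0" "t0 < h" "t0 < D" using h Dpos by (auto simp: t0_def)
      have ne: "R (t0 *\<^sub>R e) \<in> Cn i \<inter> ball 0 D" using cl(3)[OF t0(1,2)] t0 R(2) by simp
      have "\<exists>\<alpha> c. 0 < \<alpha> \<and> \<alpha> < 1 \<and> c > 0 \<and>
        (\<forall>x r. (\<forall>y\<in>Cn i \<inter> ball 0 D. \<forall>t. 0 < t \<and> t \<le> 1 \<longrightarrow> x + t *\<^sub>R y \<in> U) \<and> 0 < r \<and> (U = UNIV \<or> r \<le> D) \<longrightarrow>
          emeasure lebesgue (Wset U x r \<alpha>) \<ge> ennreal (c * r ^ (CARD('n) ^ 2)))"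
        by (rule key) (use cl(1) R(2) ne Dpos U(1) in auto)
      then obtain \<alpha> c where ac: "0 < \<alpha> \<and> \<alpha> < 1 \<and> c > 0 \<and>
        (\<forall>x r. (\<forall>y\<in>Cn i \<inter> ball 0 D. \<forall>t. 0 < t \<and> t \<le> 1 \<longrightarrow> x + t *\<^sub>R y \<in> U) \<and> 0 < r \<and> (U = UNIV \<or> r \<le> D) \<longrightarrow>
          emeasure lebesgue (Wset U x r \<alpha>) \<ge> ennreal (c * r ^ (CARD('n) ^ 2)))"
        by (elim exE) (erule that)
      have hx: "(\<forall>y\<in>Cn i \<inter> ball 0 D. \<forall>t. 0 < t \<and> t \<le> 1 \<longrightarrow> x + t *\<^sub>R y \<in> U)" if x: "x \<in> U" "x \<in> V i" for x
      proof (intro ballI allI impI)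
        fix y :: "real^'n" and t :: real assume y: "y \<in> Cn i \<inter> ball 0 D" and t: "0 < t \<and> t \<le> 1"
        have "t *\<^sub>R y \<in> Cn i" using cl(2)[of y t] y t R(2) by auto
        then have "x + t *\<^sub>R y \<in> {p + c | p c. p \<in> U \<inter> V i \<and> c \<in> Cn i}" using x by blast
        then show "x + t *\<^sub>R y \<in> U" using Vi i by blast
      qed
      have "P i \<alpha> c"
        unfolding P_def
      proof (intro conjI allI impI)
        show "0 < \<alpha>" "\<alpha> < 1" "c > 0" using ac by simp_all
        fix x r assume xr: "x \<in> U \<and> x \<in> V i \<and> 0 < r \<and> r \<le> D"
        show "emeasure lebesgue (Wset U x r \<alpha>) \<ge> ennreal (c * r ^ (CARD('n) ^ 2))"
          using ac hx[of x] xr by simp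
      qed
      then show ?thesis by (intro exI)
    qed
    have "\<forall>i. \<exists>\<alpha>. \<exists>c. i < m \<longrightarrow> P i \<alpha> c"
    proof
      fix i show "\<exists>\<alpha>. \<exists>c. i < m \<longrightarrow> P i \<alpha> c"
      proof (cases "i < m")
        case True then show ?thesis using Pex[OF True] by simp
      qed simp
    qed
    then have "\<exists>\<alpha>f. \<forall>i. \<exists>c. i < m \<longrightarrow> P i (\<alpha>f i) c" by (rule choice)
    then obtain \<alpha>f where "\<forall>i. \<exists>c. i < m \<longrightarrow> P i (\<alpha>f i) c" by (elim exE)
    then have "\<exists>cf. \<forall>i. i < m \<longrightarrow> P i (\<alpha>f i) (cf i)" by (rule choice)
    then obtain cf where f0: "\<forall>i. i < m \<longrightarrow> P i (\<alpha>f i) (cf i)" by (elim exE)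
    have f: "\<And>i. i < m \<Longrightarrow> 0 < \<alpha>f i \<and> \<alpha>f i < 1 \<and> cf i > 0 \<and>
      (\<forall>x r. x \<in> U \<and> x \<in> V i \<and> 0 < r \<and> r \<le> D \<longrightarrow>
        emeasure lebesgue (Wset U x r (\<alpha>f i)) \<ge> ennreal (cf i * r ^ (CARD('n) ^ 2)))"
      using f0 unfolding P_def by simp
    define K where "K = closure U - (\<Union>i<m. V i)"
    have "compact K" unfolding K_def compact_eq_bounded_closed
      using Vi U(2) by (intro conjI closed_Diff open_UN bounded_subset[OF bounded_closure[OF U(2)]]) auto
    moreover have "K \<subseteq> U" using fr unfolding K_def closure_Un_frontier by auto
    ultimately obtain \<rho> where \<rho>: "\<rho> > 0" "(\<Union>x\<in>K. ball x \<rho>) \<subseteq> U"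
      using compact_subset_open_imp_ball_epsilon_subset[OF _ U(1)] by blast
    have "\<exists>\<alpha> c. 0 < \<alpha> \<and> \<alpha> < 1 \<and> c > 0 \<and>
      (\<forall>x r. (\<forall>y\<in>ball 0 (min \<rho> D). \<forall>t. 0 < t \<and> t \<le> 1 \<longrightarrow> x + t *\<^sub>R y \<in> U) \<and> 0 < r \<and> (U = UNIV \<or> r \<le> D) \<longrightarrow>
        emeasure lebesgue (Wset U x r \<alpha>) \<ge> ennreal (c * r ^ (CARD('n) ^ 2)))"
      by (rule key) (use \<rho> Dpos U(1) in auto)
    then obtain \<alpha>0 c0 where ac0: "0 < \<alpha>0" "\<alpha>0 < 1" "c0 > 0"
      "\<And>x r. (\<forall>y\<in>ball 0 (min \<rho> D). \<forall>t. 0 < t \<and> t \<le> 1 \<longrightarrow> x + t *\<^sub>R y \<in> U) \<Longrightarrow> 0 < r \<Longrightarrow> r \<le> D \<Longrightarrow>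
        emeasure lebesgue (Wset U x r \<alpha>0) \<ge> ennreal (c0 * r ^ (CARD('n) ^ 2))"
      by blast
    have hK: "\<forall>y\<in>ball 0 (min \<rho> D). \<forall>t. 0 < t \<and> t \<le> 1 \<longrightarrow> x + t *\<^sub>R y \<in> U" if "x \<in> K" for x
    proof (intro ballI allI impI)
      fix y :: "real^'n" and t :: real assume y: "y \<in> ball 0 (min \<rho> D)" and t: "0 < t \<and> t \<le> 1"
      have "norm (t *\<^sub>R y) \<le> norm y" using t by (simp add: mult_left_le_one_le)
      also have "\<dots> < \<rho>" using y by simp
      finally have "x + t *\<^sub>R y \<in> ball x \<rho>" by (simp add: dist_norm)
      then show "x + t *\<^sub>R y \<in> U" using \<rho>(2) that by blast
    qed
    define C where "C = Min (insert c0 (cf ` {..<m}))"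
    have cfpos: "\<forall>i<m. cf i > 0" using f by blast
    have Cpos: "C > 0" unfolding C_def using ac0(3) cfpos by (subst Min_gr_iff) (auto intro: finite_imageI)
    have C0: "C \<le> c0" "\<And>i. i < m \<Longrightarrow> C \<le> cf i" unfolding C_def by auto
    have mono: "ennreal (C * r ^ (CARD('n) ^ 2)) \<le> ennreal (c * r ^ (CARD('n) ^ 2))" if "C \<le> c" "0 < r" for c r
      using that by (intro ennreal_leI mult_right_mono) auto
    show ?thesis
    proof (rule exI[of _ C], intro conjI Cpos ballI)
      fix x assume x: "x \<in> U"
      show "\<exists>\<alpha>. 0 < \<alpha> \<and> \<alpha> < 1 \<and> (\<forall>r. 0 < r \<and> (U = UNIV \<or> r < diameter U) \<longrightarrow>
              emeasure lebesgue (Wset U x r \<alpha>) \<ge> ennreal (C * r ^ (CARD('n) ^ 2)))"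
      proof (cases "\<exists>i<m. x \<in> V i")
        case True
        then obtain i where i: "i < m" "x \<in> V i" by blast
        show ?thesis
        proof (intro exI[of _ "\<alpha>f i"] conjI allI impI)
          show "0 < \<alpha>f i" "\<alpha>f i < 1" using f[OF i(1)] by auto
          fix r assume r: "0 < r \<and> (U = UNIV \<or> r < diameter U)"
          have "ennreal (C * r ^ (CARD('n) ^ 2)) \<le> ennreal (cf i * r ^ (CARD('n) ^ 2))"
            using mono C0(2)[OF i(1)] r by blast
          also have "\<dots> \<le> emeasure lebesgue (Wset U x r (\<alpha>f i))"
            using f[OF i(1)] x i(2) r rD by blast
          finally show "emeasure lebesgue (Wset U x r (\<alpha>f i)) \<ge> ennreal (C * r ^ (CARD('n) ^ 2))" .
        qed
      next
        case False
        then have xK: "x \<in> K" using x closure_subset unfolding K_def by auto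
        show ?thesis
        proof (intro exI[of _ "\<alpha>0"] conjI allI impI)
          show "0 < \<alpha>0" "\<alpha>0 < 1" using ac0 by auto
          fix r assume r: "0 < r \<and> (U = UNIV \<or> r < diameter U)"
          have "ennreal (C * r ^ (CARD('n) ^ 2)) \<le> ennreal (c0 * r ^ (CARD('n) ^ 2))"
            using mono C0(1) r by blast
          also have "\<dots> \<le> emeasure lebesgue (Wset U x r \<alpha>0)"
            using ac0(4)[OF hK[OF xK]] r rD by blast
          finally show "emeasure lebesgue (Wset U x r \<alpha>0) \<ge> ennreal (C * r ^ (CARD('n) ^ 2))" .
        qed
      qed
    qed
  qed
qed

end
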